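(* Let $\varphi$ be a random dynamical system with memoryless noise on $X$ (setting in the context), let $\rho$ be a stationary probability measure of the Markov transition probabilities $(\varphi_x^t)$, and let $\mu_\rho$ be the unique past-measurable invariant measure of $\varphi$ satisfying $\pi_{X*}\mu_\rho=\rho$. Then $\mu_\rho$ is the only probability measure $\mu'$ on $(\Omega\times X,\mathcal{F}\otimes\mathcal{B}(X))$ that is invariant under $\Theta^t$ for all $t\in\mathbb{T}^+$ and whose restriction to $\mathcal{F}_0^\infty\otimes\mathcal{B}(X)$ coincides with $\mathbb{P}|_{\mathcal{F}_0^\infty}\otimes\rho$.
   Context: Setting. $\mathbb{T}$ is $\mathbb{Z}$ or $\mathbb{R}$, $\mathbb{T}^+ := \mathbb{T}\cap[0,\infty)$. $(\Omega,\mathcal{F})$ is a measurable space with sub-$\sigma$-algebras $(\mathcal{F}_s^{s+t})_{s\in\mathbb{T},t\in\mathbb{T}^+}$ such that $\mathcal{F}_{t_1}^{t_2}\subset\mathcal{F}_{t_0}^{t_3}$ whenever $t_0\le t_1\le t_2\le t_3$, and these generate $\mathcal{F}$. Write $\mathcal{F}_s^\infty:=\sigma(\mathcal{F}_s^{s+t}:t\in\mathbb{T}^+)$ and $\mathcal{F}_{-\infty}^t:=\sigma(\mathcal{F}_{t-s}^t:s\in\mathbb{T}^+)$. $(\theta^t)_{t\in\mathbb{T}}$ is a group of measurable maps $\Omega\to\Omega$ with $\theta^\tau\mathcal{F}_s^t=\mathcal{F}_{s-\tau}^{t-\tau}$. $\mathbb{P}$ is a probability measure on $(\Omega,\mathcal{F})$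 with $\theta^t_*\mathbb{P}=\mathbb{P}$, and such that for each $t$, $\mathcal{F}_{-\infty}^t$ and $\mathcal{F}_t^\infty$ are $\mathbb{P}$-independent. $(X,d)$ is a separable metric space which is a Borel subset of its $d$-completion. $\varphi=(\varphi(t,\omega))_{t\in\mathbb{T}^+,\omega\in\Omega}$ is a family of continuous maps $X\to X$ such that (a) $\omega\mapsto\varphi(t,\omega)x$ is $(\mathcal{F}_0^t,\mathcal{B}(X))$-measurable; (b) $\varphi(0,\omega)=\mathrm{id}_X$; (c) $\varphi(s+t,\omega)=\varphi(t,\theta^s\omega)\circ\varphi(s,\omega)$; (d) if $t_n\downarrow t$ in $\mathbb{T}^+$ and $x_n\to x$ then $\varphi(t_n,\omega)x_n\to\varphi(t,\omega)x$ for all $\omega$. Transition probabilities: $\varphi_x^t(A):=\mathbb{P}(\omega:\varphi(t,\omega)x\in A)$; $\rho$ is stationary if $\rho(A)=\int\varphi_x^t(A)\rho(dx)$ for all $t,A$. $\Theta^t(\omega,x):=(\theta^t\omega,\varphi(t,\omega)x)$; $\pi_\Omega,\pi_X$ are the projections of $\Omega\times X$. Definitions. A probability measure $\mu$ on $(\Omega\times X,\mathcal{F}\otimes\mathcal{B}(X))$ is $\mathbb{P}$-compatible if $\pi_{\Omega*}\mu=\mathbb{P}$; such $\mu$ has a disintegration $(\mu_\omega)_{\omega\in\Omega}$ (a measurable family of probability measures on $X$ with $\mu(A)=\int\mu_\omega(\{x:(\omega,x)\in A\})\mathbb{P}(d\omega)$), unique up to $\mathbb{P}$-a.e. equality. $\mu$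 is past-measurable if it admits a disintegration with $\omega\mapsto\mu_\omega(A)$ being $\mathcal{F}_{-\infty}^0$-measurable for all Borel $A$. An invariant measure of $\varphi$ is a $\mathbb{P}$-compatible probability measure invariant under all $\Theta^t$, $t\in\mathbb{T}^+$. It is known (and assumed here) that for each stationary $\rho$ there is a unique past-measurable invariant measure $\mu_\rho$ of $\varphi$ with $\pi_{X*}\mu_\rho=\rho$. *)

theory Defs
  imports "HOL-Probability.Probability"
begin

definition time_Z_or_R :: "'t::{linordered_ab_group_add,linorder_topology} itself \<Rightarrow> bool" where
  "time_Z_or_R _ \<longleftrightarrow>
     (\<exists>f::'t \<Rightarrow> int. bij f \<and> strict_mono f \<and> (\<forall>a b. f (a + b) = f a + f b)) \<or>
     (\<exists>f::'t \<Rightarrow> real. bij f \<and> strict_mono f \<and> (\<forall>a b. f (a + b) = f a + f b))"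

text \<open>F s u stands for the sigma-algebra F_s^u (s \<le> u).\<close>
definition future_alg :: "'w measure \<Rightarrow> ('t::linordered_ab_group_add \<Rightarrow> 't \<Rightarrow> 'w set set) \<Rightarrow> 't \<Rightarrow> 'w set set" where
  "future_alg M F s = sigma_sets (space M) (\<Union>t\<in>{t. 0 \<le> t}. F s (s + t))"

definition past_alg :: "'w measure \<Rightarrow> ('t::linordered_ab_group_add \<Rightarrow> 't \<Rightarrow> 'w set set) \<Rightarrow> 't \<Rightarrow> 'w set set" where
  "past_alg M F t = sigma_sets (space M) (\<Union>s\<in>{s. 0 \<le> s}. F (t - s) t)"

text \<open>The standing setting: memoryless noise (M = (Omega, F, P)) and an RDS phi on the
  separable metric space X, realised as a Borel subset of a Polish space 'c
  (namely of its completion); B(X) is the Borel sigma-algebra of X.\<close>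
definition memoryless_RDS ::
  "'w measure \<Rightarrow> ('t::{linordered_ab_group_add,linorder_topology} \<Rightarrow> 't \<Rightarrow> 'w set set)
    \<Rightarrow> ('t \<Rightarrow> 'w \<Rightarrow> 'w) \<Rightarrow> 'c::polish_space set \<Rightarrow> ('t \<Rightarrow> 'w \<Rightarrow> 'c \<Rightarrow> 'c) \<Rightarrow> bool" where
  "memoryless_RDS M F \<theta> X \<phi> \<longleftrightarrow>
     prob_space M \<and>
     (\<forall>s u. s \<le> u \<longrightarrow> sigma_algebra (space M) (F s u) \<and> F s u \<subseteq> sets M) \<and>
     (\<forall>t0 t1 t2 t3. t0 \<le> t1 \<and> t1 \<le> t2 \<and> t2 \<le> t3 \<longrightarrow> F t1 t2 \<subseteq> F t0 t3) \<and>
     sets M = sigma_sets (space M) (\<Union>s. \<Union>t\<in>{t. 0 \<le> t}. F s (s + t)) \<and>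
     (\<forall>\<omega>\<in>space M. \<theta> 0 \<omega> = \<omega>) \<and>
     (\<forall>s t. \<forall>\<omega>\<in>space M. \<theta> (s + t) \<omega> = \<theta> s (\<theta> t \<omega>)) \<and>
     (\<forall>t. \<theta> t \<in> measurable M M) \<and>
     (\<forall>\<tau> s u. s \<le> u \<longrightarrow> (\<lambda>A. \<theta> \<tau> ` A) ` F s u = F (s - \<tau>) (u - \<tau>)) \<and>
     (\<forall>t. distr M M (\<theta> t) = M) \<and>
     (\<forall>t. prob_space.indep_set M (past_alg M F t) (future_alg M F t)) \<and>
     X \<in> sets borel \<and>
     (\<forall>t\<ge>0. \<forall>\<omega>\<in>space M. \<phi> t \<omega> ` X \<subseteq> X \<and> continuous_on X (\<phi> t \<omega>)) \<and>
     (\<forall>t\<ge>0. \<forall>x\<in>X. (\<lambda>\<omega>. \<phi> t \<omega> x) \<in> measurable (sigma (space M) (F 0 t)) (restrict_space borel X)) \<and>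
     (\<forall>\<omega>\<in>space M. \<forall>x\<in>X. \<phi> 0 \<omega> x = x) \<and>
     (\<forall>s\<ge>0. \<forall>t\<ge>0. \<forall>\<omega>\<in>space M. \<forall>x\<in>X. \<phi> (s + t) \<omega> x = \<phi> t (\<theta> s \<omega>) (\<phi> s \<omega> x)) \<and>
     (\<forall>\<omega>\<in>space M. \<forall>(tn::nat \<Rightarrow> 't) t (xn::nat \<Rightarrow> 'c) x.
        t \<ge> 0 \<and> decseq tn \<and> (\<forall>n. tn n \<ge> t) \<and> tn \<longlonglongrightarrow> t \<and>
        (\<forall>n. xn n \<in> X) \<and> x \<in> X \<and> xn \<longlonglongrightarrow> x
        \<longrightarrow> (\<lambda>n. \<phi> (tn n) \<omega> (xn n)) \<longlonglongrightarrow> \<phi> t \<omega> x)"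

definition trans_prob :: "'w measure \<Rightarrow> ('t \<Rightarrow> 'w \<Rightarrow> 'c \<Rightarrow> 'c) \<Rightarrow> 't \<Rightarrow> 'c \<Rightarrow> 'c set \<Rightarrow> ennreal" where
  "trans_prob M \<phi> t x A = emeasure M {\<omega> \<in> space M. \<phi> t \<omega> x \<in> A}"

definition stationary ::
  "'w measure \<Rightarrow> 'c::topological_space set \<Rightarrow> ('t::linordered_ab_group_add \<Rightarrow> 'w \<Rightarrow> 'c \<Rightarrow> 'c) \<Rightarrow> 'c measure \<Rightarrow> bool" where
  "stationary M X \<phi> \<rho> \<longleftrightarrow> prob_space \<rho> \<and> sets \<rho> = sets (restrict_space borel X) \<and>
     (\<forall>t\<ge>0. \<forall>A\<in>sets (restrict_space borel X).
        emeasure \<rho> A = (\<integral>\<^sup>+ x. trans_prob M \<phi> t x A \<partial>\<rho>))"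

definition Theta :: "('t \<Rightarrow> 'w \<Rightarrow> 'w) \<Rightarrow> ('t \<Rightarrow> 'w \<Rightarrow> 'c \<Rightarrow> 'c) \<Rightarrow> 't \<Rightarrow> 'w \<times> 'c \<Rightarrow> 'w \<times> 'c" where
  "Theta \<theta> \<phi> t = (\<lambda>(\<omega>, x). (\<theta> t \<omega>, \<phi> t \<omega> x))"

definition Theta_invariant_prob ::
  "'w measure \<Rightarrow> 'c::topological_space set \<Rightarrow> ('t::linordered_ab_group_add \<Rightarrow> 'w \<Rightarrow> 'w)
    \<Rightarrow> ('t \<Rightarrow> 'w \<Rightarrow> 'c \<Rightarrow> 'c) \<Rightarrow> ('w \<times> 'c) measure \<Rightarrow> bool" where
  "Theta_invariant_prob M X \<theta> \<phi> \<mu> \<longleftrightarrow>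
     prob_space \<mu> \<and> sets \<mu> = sets (M \<Otimes>\<^sub>M restrict_space borel X) \<and>
     (\<forall>t\<ge>0. distr \<mu> (M \<Otimes>\<^sub>M restrict_space borel X) (Theta \<theta> \<phi> t) = \<mu>)"

definition P_compatible :: "'w measure \<Rightarrow> ('w \<times> 'c) measure \<Rightarrow> bool" where
  "P_compatible M \<mu> \<longleftrightarrow> distr \<mu> M fst = M"

definition invariant_measure ::
  "'w measure \<Rightarrow> 'c::topological_space set \<Rightarrow> ('t::linordered_ab_group_add \<Rightarrow> 'w \<Rightarrow> 'w)
    \<Rightarrow> ('t \<Rightarrow> 'w \<Rightarrow> 'c \<Rightarrow> 'c) \<Rightarrow> ('w \<times> 'c) measure \<Rightarrow> bool" where
  "invariant_measure M X \<theta> \<phi> \<mu> \<longleftrightarrow> Theta_invariant_prob M X \<theta> \<phi> \<mu> \<and> P_compatible M \<mu>"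

definition is_disintegration ::
  "'w measure \<Rightarrow> 'c::topological_space set \<Rightarrow> ('w \<times> 'c) measure \<Rightarrow> ('w \<Rightarrow> 'c measure) \<Rightarrow> bool" where
  "is_disintegration M X \<mu> K \<longleftrightarrow>
     (\<forall>\<omega>\<in>space M. prob_space (K \<omega>) \<and> sets (K \<omega>) = sets (restrict_space borel X)) \<and>
     (\<forall>A\<in>sets (restrict_space borel X). (\<lambda>\<omega>. emeasure (K \<omega>) A) \<in> borel_measurable M) \<and>
     (\<forall>A\<in>sets (M \<Otimes>\<^sub>M restrict_space borel X).
        emeasure \<mu> A = (\<integral>\<^sup>+ \<omega>. emeasure (K \<omega>) {x. (\<omega>, x) \<in> A} \<partial>M))"

definition past_measurable ::
  "'w measure \<Rightarrow> ('t::linordered_ab_group_add \<Rightarrow> 't \<Rightarrow> 'w set set) \<Rightarrow> 'c::topological_space set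
    \<Rightarrow> ('w \<times> 'c) measure \<Rightarrow> bool" where
  "past_measurable M F X \<mu> \<longleftrightarrow>
     (\<exists>K. is_disintegration M X \<mu> K \<and>
        (\<forall>A\<in>sets (restrict_space borel X).
           (\<lambda>\<omega>. emeasure (K \<omega>) A) \<in> borel_measurable (sigma (space M) (past_alg M F 0))))"

end

theory Submission
  imports Defs
begin

lemma dense_seq:
  fixes X :: "'c::polish_space set"
  assumes "X \<noteq> {}"
  obtains e :: "nat \<Rightarrow> 'c" where "range e \<subseteq> X" "\<And>x r. x \<in> X \<Longrightarrow> r > 0 \<Longrightarrow> \<exists>k. dist x (e k) < r"
proof -
  obtain B :: "'c set set" where B: "countable B" "topological_basis B" using ex_countable_basis by blast
  define D where "D = (\<lambda>b. SOME x. x \<in> b \<inter> X) ` {b\<in>B. b \<inter> X \<noteq> {}}"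
  have cD: "countable D" unfolding D_def using B(1) by auto
  have DX: "D \<subseteq> X" unfolding D_def by (auto intro: someI2_ex)
  have dense: "\<exists>d\<in>D. dist x d < r" if xX: "x \<in> X" and rp: "r > 0" for x r
  proof -
    obtain b where b: "b \<in> B" "x \<in> b" "b \<subseteq> ball x r"
      using topological_basisE[OF B(2) open_ball centre_in_ball[THEN iffD2, OF rp]] by blast
    then have "b \<inter> X \<noteq> {}" using that by auto
    then have "(SOME y. y \<in> b \<inter> X) \<in> D" "(SOME y. y \<in> b \<inter> X) \<in> b"
      unfolding D_def using b by (auto intro: someI2_ex)
    then show ?thesis using b by (meson mem_ball subsetD)
  qed
  have "D \<noteq> {}" using dense[of _ 1] assms by auto
  define e where "e = from_nat_into D"
  have "range e = D" unfolding e_def using range_from_nat_into[OF \<open>D \<noteq> {}\<close> cD] .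
  then show ?thesis using that[of e] DX dense by (metis imageE)
qed

lemma caratheodory:
  fixes f :: "'a \<Rightarrow> 'c::polish_space \<Rightarrow> 'c"
  assumes Xne: "X \<noteq> {}"
    and meas: "\<And>x. x \<in> X \<Longrightarrow> (\<lambda>\<omega>. f \<omega> x) \<in> measurable N (restrict_space borel X)"
    and cont: "\<And>\<omega>. \<omega> \<in> space N \<Longrightarrow> continuous_on X (f \<omega>) \<and> f \<omega> ` X \<subseteq> X"
  shows "(\<lambda>p. f (fst p) (snd p)) \<in> measurable (N \<Otimes>\<^sub>M restrict_space borel X) (restrict_space borel X)"
proof -
  obtain e :: "nat \<Rightarrow> 'c" where eX: "range e \<subseteq> X" and ed: "\<And>x r. x \<in> X \<Longrightarrow> r > 0 \<Longrightarrow> \<exists>k. dist x (e k) < r"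
    using dense_seq[OF Xne] by blast
  define g where "g n x = (LEAST k. dist x (e k) < 1 / real (Suc n))" for n x
  have gm: "g n \<in> measurable (restrict_space borel X) (count_space UNIV)" for n
    unfolding g_def
  proof (intro measurable_Least measurable_restrict_space1)
    fix i show "(\<lambda>x. dist x (e i) < 1 / real (Suc n)) \<in> borel \<rightarrow>\<^sub>M count_space UNIV"
      unfolding Measurable.pred_def
      by (rule borel_measurable_less[OF borel_measurable_continuous_onI borel_measurable_const]) (intro continuous_intros)
  qed
  have hm: "(\<lambda>p. f (fst p) (e (g n (snd p)))) \<in> measurable (N \<Otimes>\<^sub>M restrict_space borel X) (restrict_space borel X)" for n
  proof (rule measurable_compose_countable[where f="\<lambda>k p. f (fst p) (e k)" and g="\<lambda>p. g n (snd p)"])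
    fix k
    show "(\<lambda>p. f (fst p) (e k)) \<in> measurable (N \<Otimes>\<^sub>M restrict_space borel X) (restrict_space borel X)"
      by (rule measurable_fst''[OF meas]) (use eX in auto)
  next
    show "(\<lambda>p. g n (snd p)) \<in> measurable (N \<Otimes>\<^sub>M restrict_space borel X) (count_space UNIV)"
      using gm by (intro measurable_snd'') 
  qed
  have gd: "dist x (e (g n x)) < 1 / real (Suc n)" if xX: "x \<in> X" for x n
  proof -
    obtain k where "dist x (e k) < 1 / real (Suc n)" using ed[OF xX, of "1 / real (Suc n)"] by auto
    then show ?thesis unfolding g_def by (rule LeastI)
  qed
  have lim: "(\<lambda>n. f (fst p) (e (g n (snd p)))) \<longlonglongrightarrow> f (fst p) (snd p)"
    if "p \<in> space (N \<Otimes>\<^sub>M restrict_space borel X)" for p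
  proof -
    have p: "fst p \<in> space N" "snd p \<in> X" using that by (auto simp: space_pair_measure space_restrict_space)
    have "(\<lambda>n. e (g n (snd p))) \<longlonglongrightarrow> snd p"
    proof (rule tendsto_dist_iff[THEN iffD2], rule LIMSEQ_I)
      fix r :: real assume "r > 0"
      then obtain n0 where n0: "1 / real (Suc n0) < r" using reals_Archimedean[OF \<open>r > 0\<close>] by (metis inverse_eq_divide)
      show "\<exists>no. \<forall>n\<ge>no. norm (dist (e (g n (snd p))) (snd p) - 0) < r"
      proof (intro exI allI impI)
        fix n assume "n \<ge> n0"
        then have "1 / real (Suc n) \<le> 1 / real (Suc n0)" by (simp add: frac_le)
        then show "norm (dist (e (g n (snd p))) (snd p) - 0) < r"
          using gd[OF p(2), of n] n0 by (simp add: dist_commute)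
      qed
    qed
    then show ?thesis
    proof (rule continuous_on_tendsto_compose[OF conjunct1[OF cont[OF p(1)]] _ p(2)])
      show "\<forall>\<^sub>F n in sequentially. e (g n (snd p)) \<in> X" using eX by (intro always_eventually) auto
    qed
  qed
  have "(\<lambda>p. f (fst p) (snd p)) \<in> borel_measurable (N \<Otimes>\<^sub>M restrict_space borel X)"
  proof (rule borel_measurable_LIMSEQ_metric[OF _ lim])
    fix n show "(\<lambda>p. f (fst p) (e (g n (snd p)))) \<in> borel_measurable (N \<Otimes>\<^sub>M restrict_space borel X)"
      using hm[of n] unfolding measurable_restrict_space2_iff by (rule conjunct1)
  qed auto
  moreover have "(\<lambda>p. f (fst p) (snd p)) \<in> space (N \<Otimes>\<^sub>M restrict_space borel X) \<rightarrow> X"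
    using cont by (fastforce simp: space_pair_measure space_restrict_space)
  ultimately show ?thesis by (simp add: measurable_restrict_space2_iff)
qed

lemma indep_prod:
  fixes f h :: "'a \<Rightarrow> ennreal"
  assumes P: "prob_space M" and ind: "prob_space.indep_set M Pa Fu"
    and sP: "sigma_algebra (space M) Pa" and sF: "sigma_algebra (space M) Fu"
    and f: "f \<in> borel_measurable (sigma (space M) Pa)"
    and h: "h \<in> borel_measurable (sigma (space M) Fu)"
  shows "(\<integral>\<^sup>+\<omega>. h \<omega> * f \<omega> \<partial>M) = (\<integral>\<^sup>+\<omega>. h \<omega> \<partial>M) * (\<integral>\<^sup>+\<omega>. f \<omega> \<partial>M)"
proof -
  interpret prob_space M by fact
  have PaE: "Pa \<subseteq> sets M" using indep_setD_ev1[OF ind] .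
  have FuE: "Fu \<subseteq> sets M" using indep_setD_ev2[OF ind] .
  have sigP: "sets (sigma (space M) Pa) = Pa"
    using sP by (simp add: sigma_algebra.sets_measure_of_eq)
  have sigF: "sets (sigma (space M) Fu) = Fu"
    using sF by (simp add: sigma_algebra.sets_measure_of_eq)
  have subP: "subalgebra M (sigma (space M) Pa)" unfolding subalgebra_def using sigP PaE by (simp add: space_measure_of_conv)
  have subF: "subalgebra M (sigma (space M) Fu)" unfolding subalgebra_def using sigF FuE by (simp add: space_measure_of_conv)
  have spP: "space (sigma (space M) Pa) = space M" and spF: "space (sigma (space M) Fu) = space M"
    using subP subF by (auto simp: subalgebra_def)
  define Y where "Y = case_bool f h"
  have iv: "indep_vars (\<lambda>_. borel) Y UNIV"
    unfolding indep_vars_def2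
  proof
    show "\<forall>i\<in>UNIV. random_variable borel (Y i)"
      using measurable_from_subalg[OF subP f] measurable_from_subalg[OF subF h]
      by (auto simp: Y_def split: bool.split)
    show "indep_sets (\<lambda>i. {Y i -` A \<inter> space M |A. A \<in> sets borel}) UNIV"
      apply (rule indep_sets_mono_sets[OF ind[unfolded indep_set_def]])
      using measurable_sets[OF f] measurable_sets[OF h] sigP sigF spP spF
      by (auto simp: Y_def split: bool.split)
  qed
  have "(\<integral>\<^sup>+\<omega>. (\<Prod>i\<in>UNIV. Y i \<omega>) \<partial>M) = (\<Prod>i\<in>UNIV. \<integral>\<^sup>+\<omega>. Y i \<omega> \<partial>M)"
    by (rule indep_vars_nn_integral[OF _ iv]) auto
  then show ?thesis by (simp add: UNIV_bool Y_def mult.commute)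
qed

lemma sa_top: "sigma_algebra \<Omega> A \<Longrightarrow> \<Omega> \<in> A"
proof -
  assume "sigma_algebra \<Omega> A"
  then interpret sigma_algebra \<Omega> A .
  show ?thesis by simp
qed

lemma sa_Int: "sigma_algebra \<Omega> A \<Longrightarrow> a \<in> A \<Longrightarrow> b \<in> A \<Longrightarrow> a \<inter> b \<in> A"
proof -
  assume "sigma_algebra \<Omega> A" "a \<in> A" "b \<in> A"
  then interpret sigma_algebra \<Omega> A by simp
  show ?thesis using \<open>a \<in> A\<close> \<open>b \<in> A\<close> by (rule Int)
qed

lemma sa_closed: "sigma_algebra \<Omega> A \<Longrightarrow> A \<subseteq> Pow \<Omega>"
proof -
  assume "sigma_algebra \<Omega> A"
  then interpret sigma_algebra \<Omega> A .
  show ?thesis by (rule space_closed)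
qed

lemma subalg_pair:
  assumes "subalgebra A A'"
  shows "subalgebra (A \<Otimes>\<^sub>M B) (A' \<Otimes>\<^sub>M B)"
  unfolding subalgebra_def
proof
  show "space (A' \<Otimes>\<^sub>M B) = space (A \<Otimes>\<^sub>M B)"
    using assms by (simp add: space_pair_measure subalgebra_def)
  show "sets (A' \<Otimes>\<^sub>M B) \<subseteq> sets (A \<Otimes>\<^sub>M B)"
    by (rule sets_pair_in_sets) (use assms in \<open>auto simp: subalgebra_def\<close>)
qed

theorem proposition3p4:
  fixes M :: "'w measure"
    and F :: "'t::{linordered_ab_group_add,linorder_topology} \<Rightarrow> 't \<Rightarrow> 'w set set"
    and \<theta> :: "'t \<Rightarrow> 'w \<Rightarrow> 'w"
    and X :: "'c::polish_space set"
    and \<phi> :: "'t \<Rightarrow> 'w \<Rightarrow> 'c \<Rightarrow> 'c"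
    and \<rho> :: "'c measure"
    and \<mu>\<rho> :: "('w \<times> 'c) measure"
  assumes time: "time_Z_or_R TYPE('t)"
    and rds: "memoryless_RDS M F \<theta> X \<phi>"
    and stat: "stationary M X \<phi> \<rho>"
    and mu_inv: "invariant_measure M X \<theta> \<phi> \<mu>\<rho>"
    and mu_past: "past_measurable M F X \<mu>\<rho>"
    and mu_marg: "distr \<mu>\<rho> (restrict_space borel X) snd = \<rho>"
    and mu_unique: "\<And>\<nu>. invariant_measure M X \<theta> \<phi> \<nu> \<Longrightarrow> past_measurable M F X \<nu> \<Longrightarrow>
                      distr \<nu> (restrict_space borel X) snd = \<rho> \<Longrightarrow> \<nu> = \<mu>\<rho>"
  shows "Theta_invariant_prob M X \<theta> \<phi> \<mu>\<rho> \<and>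
         (\<forall>A\<in>sets (sigma (space M) (future_alg M F 0) \<Otimes>\<^sub>M restrict_space borel X).
            emeasure \<mu>\<rho> A = emeasure (restr_to_subalg M (sigma (space M) (future_alg M F 0)) \<Otimes>\<^sub>M \<rho>) A) \<and>
         (\<forall>\<mu>'. Theta_invariant_prob M X \<theta> \<phi> \<mu>' \<and>
            (\<forall>A\<in>sets (sigma (space M) (future_alg M F 0) \<Otimes>\<^sub>M restrict_space borel X).
               emeasure \<mu>' A = emeasure (restr_to_subalg M (sigma (space M) (future_alg M F 0)) \<Otimes>\<^sub>M \<rho>) A)
            \<longrightarrow> \<mu>' = \<mu>\<rho>)"
proof -
  define \<Omega> where "\<Omega> = space M"
  define BX where "BX = restrict_space borel X"
  define Fut where "Fut = sigma (space M) (future_alg M F 0)"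
  define Q where "Q = restr_to_subalg M Fut \<Otimes>\<^sub>M \<rho>"
  define G where "G = (\<Union>s. \<Union>t\<in>{t. 0 \<le> t}. F s (s + t))"
  note R = rds[unfolded memoryless_RDS_def]
  have P: "prob_space M" using R[THEN conjunct1] .
  interpret prob_space M by fact
  have Fsa: "\<And>s u. s \<le> u \<Longrightarrow> sigma_algebra \<Omega> (F s u)" and FM: "\<And>s u. s \<le> u \<Longrightarrow> F s u \<subseteq> sets M"
    using R[THEN conjunct2, THEN conjunct1] unfolding \<Omega>_def by blast+
  have Fmono: "\<And>t0 t1 t2 t3. t0 \<le> t1 \<Longrightarrow> t1 \<le> t2 \<Longrightarrow> t2 \<le> t3 \<Longrightarrow> F t1 t2 \<subseteq> F t0 t3"
    using R[THEN conjunct2, THEN conjunct2, THEN conjunct1] by blast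
  have sM: "sets M = sigma_sets \<Omega> G"
    using R[THEN conjunct2, THEN conjunct2, THEN conjunct2, THEN conjunct1] unfolding \<Omega>_def G_def .
  have th0: "\<And>\<omega>. \<omega> \<in> \<Omega> \<Longrightarrow> \<theta> 0 \<omega> = \<omega>"
    using R[THEN conjunct2, THEN conjunct2, THEN conjunct2, THEN conjunct2, THEN conjunct1] unfolding \<Omega>_def by blast
  have thadd: "\<And>s t \<omega>. \<omega> \<in> \<Omega> \<Longrightarrow> \<theta> (s + t) \<omega> = \<theta> s (\<theta> t \<omega>)"
    using R[THEN conjunct2, THEN conjunct2, THEN conjunct2, THEN conjunct2, THEN conjunct2, THEN conjunct1] unfolding \<Omega>_def by blast
  have thmeas: "\<And>t. \<theta> t \<in> measurable M M"
    using R[THEN conjunct2, THEN conjunct2, THEN conjunct2, THEN conjunct2, THEN conjunct2, THEN conjunct2, THEN conjunct1] by blast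
  have thF: "\<And>\<tau> s u. s \<le> u \<Longrightarrow> (\<lambda>A. \<theta> \<tau> ` A) ` F s u = F (s - \<tau>) (u - \<tau>)"
    using R[THEN conjunct2, THEN conjunct2, THEN conjunct2, THEN conjunct2, THEN conjunct2, THEN conjunct2, THEN conjunct2, THEN conjunct1] by blast
  have ind: "\<And>t. indep_set (past_alg M F t) (future_alg M F t)"
    using R[THEN conjunct2, THEN conjunct2, THEN conjunct2, THEN conjunct2, THEN conjunct2, THEN conjunct2, THEN conjunct2, THEN conjunct2, THEN conjunct2, THEN conjunct1] by blast
  have phiX: "\<And>t \<omega>. 0 \<le> t \<Longrightarrow> \<omega> \<in> \<Omega> \<Longrightarrow> \<phi> t \<omega> ` X \<subseteq> X \<and> continuous_on X (\<phi> t \<omega>)"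
    using R[THEN conjunct2, THEN conjunct2, THEN conjunct2, THEN conjunct2, THEN conjunct2, THEN conjunct2, THEN conjunct2, THEN conjunct2, THEN conjunct2, THEN conjunct2, THEN conjunct2, THEN conjunct1] unfolding \<Omega>_def by blast
  have phim: "\<And>t x. 0 \<le> t \<Longrightarrow> x \<in> X \<Longrightarrow> (\<lambda>\<omega>. \<phi> t \<omega> x) \<in> measurable (sigma \<Omega> (F 0 t)) BX"
    using R[THEN conjunct2, THEN conjunct2, THEN conjunct2, THEN conjunct2, THEN conjunct2, THEN conjunct2, THEN conjunct2, THEN conjunct2, THEN conjunct2, THEN conjunct2, THEN conjunct2, THEN conjunct2, THEN conjunct1] unfolding \<Omega>_def BX_def by blast
  have \<rho>P: "prob_space \<rho>" using stat[unfolded stationary_def, THEN conjunct1] .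
  have s\<rho>: "sets \<rho> = sets BX"
    using stat[unfolded stationary_def, THEN conjunct2, THEN conjunct1] unfolding BX_def .
  have spBX: "space BX = X" by (simp add: BX_def space_restrict_space)
  have Xne: "X \<noteq> {}"
    using prob_space.not_empty[OF \<rho>P] sets_eq_imp_space_eq[OF s\<rho>] spBX by simp
  have GM: "G \<subseteq> sets M"
  proof
    fix x assume "x \<in> G"
    then obtain s t where st: "0 \<le> t" "x \<in> F s (s + t)" unfolding G_def by auto
    have "s \<le> s + t" using st(1) by simp
    from FM[OF this] st(2) show "x \<in> sets M" by (rule subsetD)
  qed
  have GP: "G \<subseteq> Pow \<Omega>" using GM sets.space_closed unfolding \<Omega>_def by (rule order_trans)
  have OmG: "\<Omega> \<in> G"
  proof -
    have "\<Omega> \<in> F 0 (0 + 0)" using sa_top[OF Fsa[of 0 "0+0"]] by simp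
    then show ?thesis unfolding G_def by blast
  qed
  have futG: "(\<Union>t\<in>{t. 0 \<le> t}. F 0 (0 + t)) \<subseteq> sets M"
  proof (rule UN_least)
    fix t :: 't assume "t \<in> {t. 0 \<le> t}"
    then show "F 0 (0 + t) \<subseteq> sets M" using FM[of 0 "0 + t"] by simp
  qed
  have pastG: "(\<Union>s\<in>{s. 0 \<le> s}. F (0 - s) 0) \<subseteq> sets M"
  proof (rule UN_least)
    fix t :: 't assume "t \<in> {t. 0 \<le> t}"
    then show "F (0 - t) 0 \<subseteq> sets M" using FM[of "0 - t" 0] by simp
  qed
  have MP: "sets M \<subseteq> Pow \<Omega>" using sets.space_closed \<Omega>_def by blast
  have futP: "(\<Union>t\<in>{t. 0 \<le> t}. F 0 (0 + t)) \<subseteq> Pow \<Omega>" using futG MP by (rule order_trans)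
  have pastP: "(\<Union>s\<in>{s. 0 \<le> s}. F (0 - s) 0) \<subseteq> Pow \<Omega>" using pastG MP by (rule order_trans)
  have futSA: "sigma_algebra \<Omega> (future_alg M F 0)"
    unfolding future_alg_def \<Omega>_def[symmetric] by (rule sigma_algebra_sigma_sets[OF futP])
  have pastSA: "sigma_algebra \<Omega> (past_alg M F 0)"
    unfolding past_alg_def \<Omega>_def[symmetric] by (rule sigma_algebra_sigma_sets[OF pastP])
  have futM: "future_alg M F 0 \<subseteq> sets M"
    unfolding future_alg_def using futG by (rule sets.sigma_sets_subset)
  have sFut: "sets Fut = future_alg M F 0"
    unfolding Fut_def using futSA \<Omega>_def by (simp add: sigma_algebra.sets_measure_of_eq)
  have spFut: "space Fut = \<Omega>"
    unfolding Fut_def \<Omega>_def using futSA \<Omega>_def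
    using sa_closed[OF futSA] by (simp add: space_measure_of_conv)
  have subFut: "subalgebra M Fut" unfolding subalgebra_def using sFut spFut futM \<Omega>_def by simp
  have Ffut: "F 0 u \<subseteq> future_alg M F 0" if "0 \<le> u" for u
    unfolding future_alg_def using that by (auto intro!: sigma_sets.Basic)
  have phiJ: "(\<lambda>p. \<phi> \<tau> (fst p) (snd p)) \<in> measurable (Fut \<Otimes>\<^sub>M BX) BX" if "0 \<le> \<tau>" for \<tau>
  proof -
    have spN: "space (sigma \<Omega> (F 0 \<tau>)) = \<Omega>"
      using sa_closed[OF Fsa[OF that]] by (simp add: space_measure_of_conv)
    have sN: "sets (sigma \<Omega> (F 0 \<tau>)) = F 0 \<tau>"
      using Fsa[OF that] by (simp add: sigma_algebra.sets_measure_of_eq)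
    have "(\<lambda>p. \<phi> \<tau> (fst p) (snd p)) \<in> measurable (sigma \<Omega> (F 0 \<tau>) \<Otimes>\<^sub>M BX) BX"
      unfolding BX_def
      by (rule caratheodory[OF Xne]) (use phim[OF that] phiX[OF that] spN in \<open>auto simp: BX_def\<close>)
    moreover have "subalgebra (Fut \<Otimes>\<^sub>M BX) (sigma \<Omega> (F 0 \<tau>) \<Otimes>\<^sub>M BX)"
      by (rule subalg_pair) (use spN sN spFut sFut Ffut[OF that] in \<open>auto simp: subalgebra_def\<close>)
    ultimately show ?thesis by (rule measurable_from_subalg[rotated])
  qed
  have subP: "subalgebra (M \<Otimes>\<^sub>M BX) (Fut \<Otimes>\<^sub>M BX)" by (rule subalg_pair[OF subFut])
  have ThetaM: "Theta \<theta> \<phi> \<tau> \<in> measurable (M \<Otimes>\<^sub>M BX) (M \<Otimes>\<^sub>M BX)" if "0 \<le> \<tau>" for \<tau>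
  proof -
    have "Theta \<theta> \<phi> \<tau> = (\<lambda>p. (\<theta> \<tau> (fst p), \<phi> \<tau> (fst p) (snd p)))"
      by (auto simp: Theta_def)
    moreover have "(\<lambda>p. (\<theta> \<tau> (fst p), \<phi> \<tau> (fst p) (snd p))) \<in> measurable (M \<Otimes>\<^sub>M BX) (M \<Otimes>\<^sub>M BX)"
      using measurable_from_subalg[OF subP phiJ[OF that]] thmeas[of \<tau>] by measurable
    ultimately show ?thesis by simp
  qed
  have spMBX: "space (M \<Otimes>\<^sub>M BX) = \<Omega> \<times> X" by (simp add: space_pair_measure spBX \<Omega>_def)
  have rect: "emeasure \<nu> (a \<times> b) = emeasure Q (Theta \<theta> \<phi> (max 0 (-s)) -` (a \<times> b) \<inter> (\<Omega> \<times> X))"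
    if nu: "Theta_invariant_prob M X \<theta> \<phi> \<nu>"
      and agree: "\<forall>A\<in>sets (Fut \<Otimes>\<^sub>M BX). emeasure \<nu> A = emeasure Q A"
      and t: "0 \<le> t" and a: "a \<in> F s (s + t)" and b: "b \<in> sets BX" for \<nu> s t a b
  proof -
    define \<tau> where "\<tau> = max 0 (-s)"
    have tau: "0 \<le> \<tau>" "0 \<le> s + \<tau>" unfolding \<tau>_def by (auto simp: max_def)
    have snu: "sets \<nu> = sets (M \<Otimes>\<^sub>M BX)" and inv: "distr \<nu> (M \<Otimes>\<^sub>M BX) (Theta \<theta> \<phi> \<tau>) = \<nu>"
      using nu tau unfolding Theta_invariant_prob_def BX_def by auto
    have spnu: "space \<nu> = \<Omega> \<times> X" using sets_eq_imp_space_eq[OF snu] spMBX by simp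
    have aM: "a \<in> sets M" using FM[of s "s+t"] a t by auto
    have aO: "a \<subseteq> \<Omega>" using aM sets.sets_into_space \<Omega>_def by blast
    have abM: "a \<times> b \<in> sets (M \<Otimes>\<^sub>M BX)" using aM b by auto
    have "emeasure \<nu> (a \<times> b) = emeasure (distr \<nu> (M \<Otimes>\<^sub>M BX) (Theta \<theta> \<phi> \<tau>)) (a \<times> b)"
      using inv by simp
    also have "\<dots> = emeasure \<nu> (Theta \<theta> \<phi> \<tau> -` (a \<times> b) \<inter> space \<nu>)"
      by (rule emeasure_distr[OF _ abM]) (use ThetaM[OF tau(1)] snu in \<open>simp cong: measurable_cong_sets\<close>)
    also have "\<dots> = emeasure Q (Theta \<theta> \<phi> \<tau> -` (a \<times> b) \<inter> (\<Omega> \<times> X))"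
    proof -
      define a' where "a' = \<theta> (-\<tau>) ` a"
      have "a' \<in> F (s - - \<tau>) (s + t - - \<tau>)" using thF[of s "s+t" "-\<tau>"] a t unfolding a'_def by auto
      then have "a' \<in> F (s + \<tau>) (s + t + \<tau>)" by (simp add: algebra_simps)
      moreover have "F (s + \<tau>) (s + t + \<tau>) \<subseteq> F 0 (s + t + \<tau>)"
        using tau t by (intro Fmono) (auto simp: add.commute add_increasing2)
      moreover have "0 \<le> s + t + \<tau>"
      proof -
        have e: "s + t + \<tau> = (s + \<tau>) + t" by (simp add: algebra_simps)
        show ?thesis unfolding e by (rule add_nonneg_nonneg[OF tau(2) t])
      qed
      ultimately have a'F: "a' \<in> sets Fut" using Ffut[of "s + t + \<tau>"] sFut by blast
      have eq: "Theta \<theta> \<phi> \<tau> -` (a \<times> b) \<inter> (\<Omega> \<times> X)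
          = (a' \<times> X) \<inter> ((\<lambda>p. \<phi> \<tau> (fst p) (snd p)) -` b \<inter> space (Fut \<Otimes>\<^sub>M BX))"
      proof -
        have "\<theta> \<tau> \<omega> \<in> a \<longleftrightarrow> \<omega> \<in> a'" if "\<omega> \<in> \<Omega>" for \<omega>
        proof
          assume "\<theta> \<tau> \<omega> \<in> a"
          moreover have "\<theta> (-\<tau>) (\<theta> \<tau> \<omega>) = \<omega>" using thadd[OF that, of "-\<tau>" \<tau>] th0[OF that] by simp
          ultimately show "\<omega> \<in> a'" unfolding a'_def by (metis image_eqI)
        next
          assume "\<omega> \<in> a'"
          then obtain e where e: "e \<in> a" "\<omega> = \<theta> (-\<tau>) e" unfolding a'_def by auto
          then have "e \<in> \<Omega>" using aO by auto
          then show "\<theta> \<tau> \<omega> \<in> a" using thadd[of e \<tau> "-\<tau>"] th0[of e] e by simp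
        qed
        then show ?thesis
          by (auto simp: Theta_def space_pair_measure spFut spBX)
      qed
      have "Theta \<theta> \<phi> \<tau> -` (a \<times> b) \<inter> (\<Omega> \<times> X) \<in> sets (Fut \<Otimes>\<^sub>M BX)"
        unfolding eq
      proof (rule sets.Int)
        show "a' \<times> X \<in> sets (Fut \<Otimes>\<^sub>M BX)" using a'F sets.top[of BX] spBX by auto
        show "(\<lambda>p. \<phi> \<tau> (fst p) (snd p)) -` b \<inter> space (Fut \<Otimes>\<^sub>M BX) \<in> sets (Fut \<Otimes>\<^sub>M BX)"
          by (rule measurable_sets[OF phiJ[OF tau(1)] b])
      qed
      then show ?thesis using agree spnu by simp
    qed
    finally show ?thesis unfolding \<tau>_def .
  qed
  define E where "E = {a \<times> b | a b. a \<in> G \<and> b \<in> sets BX}"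
  have EP: "E \<subseteq> Pow (\<Omega> \<times> X)"
    using GP sets.sets_into_space[of _ BX] spBX unfolding E_def by fastforce
  have Eint: "Int_stable E"
  proof (rule Int_stableI)
    fix x y assume "x \<in> E" "y \<in> E"
    then obtain a1 b1 a2 b2 where x: "x = a1 \<times> b1" "a1 \<in> G" "b1 \<in> sets BX"
      and y: "y = a2 \<times> b2" "a2 \<in> G" "b2 \<in> sets BX" unfolding E_def by blast
    obtain s1 t1 where 1: "0 \<le> t1" "a1 \<in> F s1 (s1 + t1)" using x unfolding G_def by blast
    obtain s2 t2 where 2: "0 \<le> t2" "a2 \<in> F s2 (s2 + t2)" using y unfolding G_def by blast
    define s where "s = min s1 s2"
    define u where "u = max (s1 + t1) (s2 + t2)"
    have l1: "s \<le> s1" "s \<le> s2" unfolding s_def by simp_all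
    have l2: "s1 + t1 \<le> u" "s2 + t2 \<le> u" unfolding u_def by simp_all
    have l3: "s1 \<le> s1 + t1" "s2 \<le> s2 + t2" using 1(1) 2(1) by simp_all
    have su: "s \<le> u" using l1(1) l3(1) l2(1) by (rule order_trans[OF order_trans])
    have "F s1 (s1 + t1) \<subseteq> F s u" by (rule Fmono[OF l1(1) l3(1) l2(1)])
    moreover have "F s2 (s2 + t2) \<subseteq> F s u" by (rule Fmono[OF l1(2) l3(2) l2(2)])
    ultimately have i0: "a1 \<inter> a2 \<in> F s u" using 1(2) 2(2) sa_Int[OF Fsa[OF su]] by blast
    have e: "s + (u - s) = u" by simp
    have i: "a1 \<inter> a2 \<in> F s (s + (u - s))" unfolding e by (rule i0)
    have "0 \<le> u - s" using su by simp
    then have "a1 \<inter> a2 \<in> G" unfolding G_def using i by blast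
    moreover have "b1 \<inter> b2 \<in> sets BX" using x y by auto
    ultimately show "x \<inter> y \<in> E" unfolding E_def x y Times_Int_Times by blast
  qed
  have sMBX: "sets (M \<Otimes>\<^sub>M BX) = sigma_sets (\<Omega> \<times> X) E"
  proof
    show "sigma_sets (\<Omega> \<times> X) E \<subseteq> sets (M \<Otimes>\<^sub>M BX)"
    proof (rule sets.sigma_sets_subset')
      show "E \<subseteq> sets (M \<Otimes>\<^sub>M BX)" using GM unfolding E_def by auto
      show "\<Omega> \<times> X \<in> sets (M \<Otimes>\<^sub>M BX)" using spMBX sets.top by metis
    qed
    have rect_in: "a \<times> b \<in> sigma_sets (\<Omega> \<times> X) E" if a: "a \<in> sigma_sets \<Omega> G" and b: "b \<in> sets BX" for a b
      using a
    proof (induction rule: sigma_sets.induct)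
      case (Basic a) then show ?case using b unfolding E_def by (auto intro: sigma_sets.Basic)
    next
      case Empty then show ?case by (simp add: sigma_sets.Empty)
    next
      case (Compl a)
      have bX: "b \<subseteq> X" using sets.sets_into_space[OF b] spBX by simp
      have "(\<Omega> - a) \<times> b = (\<Omega> \<times> X) - ((a \<times> b) \<union> (\<Omega> \<times> (X - b)))" using bX by auto
      moreover have "\<Omega> \<times> (X - b) \<in> E" unfolding E_def using OmG b spBX
        by (auto intro!: exI[of _ \<Omega>] exI[of _ "X - b"] sets.compl_sets[of b BX, simplified spBX])
      moreover have "a \<times> b \<union> \<Omega> \<times> (X - b) \<in> sigma_sets (\<Omega> \<times> X) E"
        by (rule sigma_sets_Un[OF Compl.IH sigma_sets.Basic]) fact
      ultimately show ?case by (metis sigma_sets.Compl)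
    next
      case (Union A)
      have "(\<Union>i. A i) \<times> b = (\<Union>i. A i \<times> b)" by auto
      then show ?case using Union.IH by (auto intro: sigma_sets.Union)
    qed
    show "sets (M \<Otimes>\<^sub>M BX) \<subseteq> sigma_sets (\<Omega> \<times> X) E"
      unfolding sets_pair_measure spBX \<Omega>_def[symmetric]
      by (rule sigma_sets_mono) (use rect_in sM in auto)
  qed
  have uniq: "\<nu>1 = \<nu>2"
    if n1: "Theta_invariant_prob M X \<theta> \<phi> \<nu>1" and a1: "\<forall>A\<in>sets (Fut \<Otimes>\<^sub>M BX). emeasure \<nu>1 A = emeasure Q A"
    and n2: "Theta_invariant_prob M X \<theta> \<phi> \<nu>2" and a2: "\<forall>A\<in>sets (Fut \<Otimes>\<^sub>M BX). emeasure \<nu>2 A = emeasure Q A"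
    for \<nu>1 \<nu>2
  proof (rule measure_eqI_generator_eq[OF Eint EP])
    fix x assume "x \<in> E"
    then obtain a b s t where x: "x = a \<times> b" "0 \<le> t" "a \<in> F s (s + t)" "b \<in> sets BX"
      unfolding E_def G_def by blast
    show "emeasure \<nu>1 x = emeasure \<nu>2 x"
      unfolding x(1) using rect[OF n1 a1 x(2-4)] rect[OF n2 a2 x(2-4)] by simp
  next
    show "sets \<nu>1 = sigma_sets (\<Omega> \<times> X) E" using n1 sMBX unfolding Theta_invariant_prob_def BX_def by simp
    show "sets \<nu>2 = sigma_sets (\<Omega> \<times> X) E" using n2 sMBX unfolding Theta_invariant_prob_def BX_def by simp
    show "range (\<lambda>i. \<Omega> \<times> X) \<subseteq> E" unfolding E_def using OmG sets.top[of BX] spBX by auto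
    show "(\<Union>i. \<Omega> \<times> X) = \<Omega> \<times> X" by simp
    fix i :: nat
    show "emeasure \<nu>1 (\<Omega> \<times> X) \<noteq> \<infinity>"
    proof -
      have "prob_space \<nu>1" using n1 unfolding Theta_invariant_prob_def by blast
      then interpret p1: prob_space \<nu>1 .
      show ?thesis using p1.emeasure_finite[of "\<Omega> \<times> X"] by simp
    qed
  qed
  have mu_rect: "emeasure \<mu>\<rho> (A \<times> B) = emeasure M A * emeasure \<rho> B" if A: "A \<in> sets Fut" and B: "B \<in> sets BX" for A B
  proof -
    obtain K where K: "is_disintegration M X \<mu>\<rho> K"
      and KP: "\<forall>B\<in>sets BX. (\<lambda>\<omega>. emeasure (K \<omega>) B) \<in> borel_measurable (sigma \<Omega> (past_alg M F 0))"
      using mu_past unfolding past_measurable_def BX_def \<Omega>_def by blast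
    have Kint: "emeasure \<mu>\<rho> C = (\<integral>\<^sup>+\<omega>. emeasure (K \<omega>) {x. (\<omega>, x) \<in> C} \<partial>M)" if "C \<in> sets (M \<Otimes>\<^sub>M BX)" for C
      using K that unfolding is_disintegration_def BX_def by blast
    have AM: "A \<in> sets M" using A sFut futM by auto
    have bX: "B \<subseteq> X" using sets.sets_into_space[OF B] spBX by simp
    have s\<mu>: "sets \<mu>\<rho> = sets (M \<Otimes>\<^sub>M BX)" using mu_inv unfolding invariant_measure_def Theta_invariant_prob_def BX_def by blast
    have "emeasure \<rho> B = emeasure (distr \<mu>\<rho> BX snd) B" using mu_marg unfolding BX_def by simp
    also have "\<dots> = emeasure \<mu>\<rho> (snd -` B \<inter> space \<mu>\<rho>)"
      by (rule emeasure_distr[OF _ B]) (simp add: s\<mu> cong: measurable_cong_sets)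
    also have "snd -` B \<inter> space \<mu>\<rho> = \<Omega> \<times> B"
      using sets_eq_imp_space_eq[OF s\<mu>] spMBX bX by auto
    also have "emeasure \<mu>\<rho> (\<Omega> \<times> B) = (\<integral>\<^sup>+\<omega>. emeasure (K \<omega>) B \<partial>M)"
      by (subst Kint) (use B in \<open>auto simp: \<Omega>_def intro!: nn_integral_cong\<close>)
    finally have rhoB: "emeasure \<rho> B = (\<integral>\<^sup>+\<omega>. emeasure (K \<omega>) B \<partial>M)" .
    have "emeasure \<mu>\<rho> (A \<times> B) = (\<integral>\<^sup>+\<omega>. emeasure (K \<omega>) {x. (\<omega>, x) \<in> A \<times> B} \<partial>M)"
      using AM B by (intro Kint) auto
    also have "\<dots> = (\<integral>\<^sup>+\<omega>. indicator A \<omega> * emeasure (K \<omega>) B \<partial>M)"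
      by (rule nn_integral_cong) (auto simp: indicator_def)
    also have "\<dots> = (\<integral>\<^sup>+\<omega>. indicator A \<omega> \<partial>M) * (\<integral>\<^sup>+\<omega>. emeasure (K \<omega>) B \<partial>M)"
    proof (rule indep_prod[OF P ind[of 0] pastSA[unfolded \<Omega>_def] futSA[unfolded \<Omega>_def]])
      show "(\<lambda>\<omega>. emeasure (K \<omega>) B) \<in> borel_measurable (sigma (space M) (past_alg M F 0))"
        using KP B \<Omega>_def by auto
      show "indicator A \<in> borel_measurable (sigma (space M) (future_alg M F 0))"
        using A unfolding Fut_def by (rule borel_measurable_indicator)
    qed
    also have "\<dots> = emeasure M A * emeasure \<rho> B" using AM rhoB by simp
    finally show ?thesis .
  qed
  have part2: "\<forall>A\<in>sets (Fut \<Otimes>\<^sub>M BX). emeasure \<mu>\<rho> A = emeasure Q A"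
  proof -
    define R where "R = restr_to_subalg M Fut"
    have sR: "sets R = sets Fut" unfolding R_def by (rule sets_restr_to_subalg[OF subFut])
    have spR: "space R = \<Omega>" unfolding R_def \<Omega>_def by (rule space_restr_to_subalg)
    have eR: "emeasure R A = emeasure M A" if "A \<in> sets Fut" for A
      unfolding R_def by (rule emeasure_restr_to_subalg[OF subFut that])
    have RP: "prob_space R"
    proof
      have "\<Omega> \<in> sets Fut" using sets.top[of Fut] spFut by simp
      then show "emeasure R (space R) = 1" using eR spR emeasure_space_1 \<Omega>_def by simp
    qed
    have s\<mu>: "sets \<mu>\<rho> = sets (M \<Otimes>\<^sub>M BX)" using mu_inv unfolding invariant_measure_def Theta_invariant_prob_def BX_def by blast
    have sub\<mu>: "subalgebra \<mu>\<rho> (Fut \<Otimes>\<^sub>M BX)"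
      using subP s\<mu> sets_eq_imp_space_eq[OF s\<mu>] unfolding subalgebra_def by simp
    define M\<mu> where "M\<mu> = restr_to_subalg \<mu>\<rho> (Fut \<Otimes>\<^sub>M BX)"
    have "R \<Otimes>\<^sub>M \<rho> = M\<mu>"
    proof (rule pair_measure_eqI)
      show "sigma_finite_measure R" using RP by (rule prob_space_imp_sigma_finite)
      show "sigma_finite_measure \<rho>" using \<rho>P by (rule prob_space_imp_sigma_finite)
      show "sets (R \<Otimes>\<^sub>M \<rho>) = sets M\<mu>"
        unfolding M\<mu>_def sets_restr_to_subalg[OF sub\<mu>] using sR s\<rho> by (rule sets_pair_measure_cong)
      fix A B assume A: "A \<in> sets R" and B: "B \<in> sets \<rho>"
      then have "A \<times> B \<in> sets (Fut \<Otimes>\<^sub>M BX)" using sR s\<rho> by auto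
      then show "emeasure R A * emeasure \<rho> B = emeasure M\<mu> (A \<times> B)"
        unfolding M\<mu>_def using emeasure_restr_to_subalg[OF sub\<mu>] mu_rect A B sR s\<rho> eR by simp
    qed
    then show ?thesis
      unfolding Q_def R_def[symmetric] M\<mu>_def using emeasure_restr_to_subalg[OF sub\<mu>] by simp
  qed
  have mu_Theta: "Theta_invariant_prob M X \<theta> \<phi> \<mu>\<rho>" using mu_inv unfolding invariant_measure_def by blast
  show ?thesis
    unfolding Fut_def[symmetric] BX_def[symmetric] Q_def[symmetric]
    using mu_Theta part2 uniq[OF _ _ mu_Theta part2] by blast
qed

end
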